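(* The sequence $((x_n, y_n))_{n \geq 0}$ of coordinates of the points visited by the Hilbert curve is $4$-regular; more precisely, for all $n \geq 0$ we have $(x_n, y_n) = v\,\gamma((n)_4)\,w$, where $(n)_4$ is the base-$4$ representation of $n$, $\gamma$ is extended to words multiplicatively, and $$v = \begin{bmatrix} 0&0&0&1&0\\ 0&0&1&1&0 \end{bmatrix},\quad w = \begin{bmatrix}1\\0\\0\\0\\0\end{bmatrix},$$ $$\gamma(0)=\begin{bmatrix} 0&0&0&0&-4\\ 1&0&-1&-1&4\\ 0&0&1&0&0\\ 0&0&0&1&0\\ 0&1&1&1&1\end{bmatrix},\quad \gamma(1)=\begin{bmatrix} 0&0&0&0&-4\\ 0&0&0&-1&0\\ 1&-2&-3&-2&4\\ 0&2&3&3&0\\ 0&1&1&1&1\end{bmatrix},$$ $$\gamma(2)=\begin{bmatrix} 0&0&0&0&-4\\ 0&-2&-2&-3&0\\ 0&0&-1&0&0\\ 1&2&3&3&4\\ 0&1&1&1&1\end{bmatrix},\quad \gamma(3)=\begin{bmatrix} 0&0&0&0&-4\\ 1&-3&-2&-2&1\\ -1&2&1&2&-4\\ 1&1&1&0&7\\ 0&1&1&1&1\end{bmatrix}.$$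
   Context: The Hilbert curve is encoded as an infinite word $\mathbf{HC} = h_0h_1h_2\cdots$ over $\{\mathtt{U},\mathtt{D},\mathtt{R},\mathtt{L}\}$ (up, down, right, left): it is the unique infinite word having every $A_n$ as a prefix, where $A_0=\epsilon$ and, with $t_D$ the coding $\mathtt{U}\mapsto\mathtt{R},\mathtt{D}\mapsto\mathtt{L},\mathtt{R}\mapsto\mathtt{U},\mathtt{L}\mapsto\mathtt{D}$ (flip about the main diagonal) and $t_H$ the coding $\mathtt{U}\mapsto\mathtt{D},\mathtt{D}\mapsto\mathtt{U},\mathtt{R}\mapsto\mathtt{L},\mathtt{L}\mapsto\mathtt{R}$ ($180^\circ$ rotation), $A_{2n+1}=A_{2n}\,\mathtt{U}\,t_D(A_{2n})\,\mathtt{R}\,t_D(A_{2n})\,\mathtt{D}\,t_H(A_{2n})$ and $A_{2n+2}=A_{2n+1}\,\mathtt{R}\,t_D(A_{2n+1})\,\mathtt{U}\,t_D(A_{2n+1})\,\mathtt{L}\,t_H(A_{2n+1})$. Starting at $(x_0,y_0)=(0,0)$, one sets $(x_{n+1},y_{n+1})=(x_n,y_n)+(1,0),(-1,0),(0,1),(0,-1)$ according as $h_n=\mathtt{R},\mathtt{L},\mathtt{U},\mathtt{D}$. A sequence is $k$-regular if some finite subset of its $k$-kernel $\{(a_{k^e n+i})_{n\ge0}: e\ge0,\ 0\le i<k^e\}$ linearly spans every element of the kernel; equivalently it admits a linear representation $a_n = v\gamma((n)_k)w$. *)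

theory Defs
  imports "Jordan_Normal_Form.Matrix"
begin

datatype dir = U | D | R | L

fun tD :: "dir \<Rightarrow> dir" where
  "tD U = R" | "tD D = L" | "tD R = U" | "tD L = D"

fun tH :: "dir \<Rightarrow> dir" where
  "tH U = D" | "tH D = U" | "tH R = L" | "tH L = R"

fun hilbA :: "nat \<Rightarrow> dir list" where
  "hilbA 0 = []"
| "hilbA (Suc n) =
     (if even n
      then hilbA n @ [U] @ map tD (hilbA n) @ [R] @ map tD (hilbA n) @ [D] @ map tH (hilbA n)
      else hilbA n @ [R] @ map tD (hilbA n) @ [U] @ map tD (hilbA n) @ [L] @ map tH (hilbA n))"

text \<open>The infinite word HC: letter n is read off the approximant A_(n+1),
  which has length 4^(n+1) - 1 > n (every A_k is a prefix of every A_m, k \<le> m).\<close>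
definition hc :: "nat \<Rightarrow> dir" where
  "hc n = hilbA (Suc n) ! n"

fun step :: "dir \<Rightarrow> int \<times> int" where
  "step R = (1, 0)" | "step L = (-1, 0)" | "step U = (0, 1)" | "step D = (0, -1)"

fun hpos :: "nat \<Rightarrow> int \<times> int" where
  "hpos 0 = (0, 0)"
| "hpos (Suc n) = (fst (hpos n) + fst (step (hc n)), snd (hpos n) + snd (step (hc n)))"

fun base4 :: "nat \<Rightarrow> nat list" where
  "base4 n = (if n = 0 then [] else base4 (n div 4) @ [n mod 4])"

definition hv :: "int mat" where
  "hv = mat_of_rows_list 5 [[0,0,0,1,0],[0,0,1,1,0]]"

definition hw :: "int mat" where
  "hw = mat_of_rows_list 1 [[1],[0],[0],[0],[0]]"

fun hgamma :: "nat \<Rightarrow> int mat" where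
  "hgamma 0 = mat_of_rows_list 5
     [[0,0,0,0,-4],[1,0,-1,-1,4],[0,0,1,0,0],[0,0,0,1,0],[0,1,1,1,1]]"
| "hgamma (Suc 0) = mat_of_rows_list 5
     [[0,0,0,0,-4],[0,0,0,-1,0],[1,-2,-3,-2,4],[0,2,3,3,0],[0,1,1,1,1]]"
| "hgamma (Suc (Suc 0)) = mat_of_rows_list 5
     [[0,0,0,0,-4],[0,-2,-2,-3,0],[0,0,-1,0,0],[1,2,3,3,4],[0,1,1,1,1]]"
| "hgamma (Suc (Suc (Suc 0))) = mat_of_rows_list 5
     [[0,0,0,0,-4],[1,-3,-2,-2,1],[-1,2,1,2,-4],[1,1,1,0,7],[0,1,1,1,1]]"
| "hgamma _ = 1\<^sub>m 5"

definition hgammaw :: "nat list \<Rightarrow> int mat" where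
  "hgammaw ds = foldr (\<lambda>d M. hgamma d * M) ds (1\<^sub>m 5)"

end

theory Submission
  imports Defs
begin

definition sx :: "dir list \<Rightarrow> int" where "sx xs = sum_list (map (\<lambda>c. fst (step c)) xs)"
definition sy :: "dir list \<Rightarrow> int" where "sy xs = sum_list (map (\<lambda>c. snd (step c)) xs)"

lemma sx_simps[simp]: "sx [] = 0" "sx (c # xs) = fst (step c) + sx xs" "sx (xs @ ys) = sx xs + sx ys"
  by (simp_all add: sx_def)
lemma sy_simps[simp]: "sy [] = 0" "sy (c # xs) = snd (step c) + sy xs" "sy (xs @ ys) = sy xs + sy ys"
  by (simp_all add: sy_def)

lemma step_tD: "step (tD c) = (snd (step c), fst (step c))" by (cases c) auto
lemma step_tH: "step (tH c) = (- fst (step c), - snd (step c))" by (cases c) auto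

lemma sx_tD[simp]: "sx (map tD xs) = sy xs" by (induction xs) (simp_all add: step_tD)
lemma sy_tD[simp]: "sy (map tD xs) = sx xs" by (induction xs) (simp_all add: step_tD)
lemma sx_tH[simp]: "sx (map tH xs) = - sx xs" by (induction xs) (simp_all add: step_tH)
lemma sy_tH[simp]: "sy (map tH xs) = - sy xs" by (induction xs) (simp_all add: step_tH)

lemma len_hilbA: "Suc (length (hilbA n)) = 4 ^ n"
proof (induction n)
  case 0 then show ?case by simp
next
  case (Suc n) then show ?case by simp
qed

lemma hilbA_Suc_nth: "i < length (hilbA n) \<Longrightarrow> hilbA (Suc n) ! i = hilbA n ! i"
  by (simp add: nth_append)

lemma len_mono: "n \<le> m \<Longrightarrow> length (hilbA n) \<le> length (hilbA m)"
proof -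
  assume "n \<le> m"
  then have "(4::nat) ^ n \<le> 4 ^ m" by (simp add: power_increasing)
  then have "Suc (length (hilbA n)) \<le> Suc (length (hilbA m))" by (simp only: len_hilbA)
  then show ?thesis by (simp only: Suc_le_mono)
qed

lemma hilbA_mono_nth: "n \<le> m \<Longrightarrow> i < length (hilbA n) \<Longrightarrow> hilbA m ! i = hilbA n ! i"
proof (induction m rule: dec_induct)
  case base then show ?case by simp
next
  case (step m)
  then show ?case using hilbA_Suc_nth[of i m] len_mono[of n m] by simp
qed

lemma lt4: "Suc n < 4 ^ Suc n"
  by (induction n) simp_all

lemma hc_nth: "i < length (hilbA m) \<Longrightarrow> hc i = hilbA m ! i"
proof -
  assume a: "i < length (hilbA m)"
  have "i < 4 ^ Suc i - 1"
  proof -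
    have "Suc i < 4 ^ Suc i" by (rule lt4)
    then show ?thesis by simp
  qed
  then have b: "i < length (hilbA (Suc i))" using len_hilbA[of "Suc i"] by simp
  have "hilbA (max m (Suc i)) ! i = hilbA m ! i" by (rule hilbA_mono_nth[OF _ a]) simp
  moreover have "hilbA (max m (Suc i)) ! i = hilbA (Suc i) ! i" by (rule hilbA_mono_nth[OF _ b]) simp
  ultimately show ?thesis by (simp add: hc_def)
qed

lemma hpos_take: "n \<le> length (hilbA m) \<Longrightarrow> hpos n = (sx (take n (hilbA m)), sy (take n (hilbA m)))"
proof (induction n)
  case 0 then show ?case by simp
next
  case (Suc n)
  then have "n < length (hilbA m)" by simp
  then have h: "hc n = hilbA m ! n" by (rule hc_nth)
  have ih: "hpos n = (sx (take n (hilbA m)), sy (take n (hilbA m)))" using Suc by simp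
  have t: "take (Suc n) (hilbA m) = take n (hilbA m) @ [hilbA m ! n]"
    using \<open>n < length (hilbA m)\<close> by (rule take_Suc_conv_app_nth)
  show ?case unfolding t by (simp add: ih h)
qed

lemma end_pos: "sx (hilbA k) = (if even k then 0 else 2^k - 1) \<and> sy (hilbA k) = (if even k then 2^k - 1 else 0)"
proof (induction k)
  case 0 then show ?case by simp
next
  case (Suc k)
  then show ?case by (cases "even k") auto
qed


lemma take_blocks:
  assumes "length A = N" "length B1 = N" "length B2 = N" "r \<le> N"
  shows "take r (A @ c1 # B1 @ c2 # B2 @ c3 # B3) = take r A"
    and "take (Suc N + r) (A @ c1 # B1 @ c2 # B2 @ c3 # B3) = A @ c1 # take r B1"
    and "take (2 * Suc N + r) (A @ c1 # B1 @ c2 # B2 @ c3 # B3) = A @ c1 # B1 @ c2 # take r B2"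
    and "take (3 * Suc N + r) (A @ c1 # B1 @ c2 # B2 @ c3 # B3) = A @ c1 # B1 @ c2 # B2 @ c3 # take r B3"
  using assms by (simp_all add: take_append take_Cons')

lemma hpos_block:
  assumes r: "r < 4 ^ k"
  shows "hpos (4^k + r) = (if even k then (snd (hpos r), 2^k + fst (hpos r))
                           else (2^k + snd (hpos r), fst (hpos r)))"
    and "hpos (2 * 4^k + r) = (2^k + snd (hpos r), 2^k + fst (hpos r))"
    and "hpos (3 * 4^k + r) = (if even k then (2 * 2^k - 1 - fst (hpos r), 2^k - 1 - snd (hpos r))
                             else (2^k - 1 - fst (hpos r), 2 * 2^k - 1 - snd (hpos r)))"
proof -
  define A where "A = hilbA k"
  define N where "N = length A"
  have L4: "4 ^ k = Suc N" unfolding N_def A_def by (rule len_hilbA[symmetric])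
  have rL: "r \<le> N" using r L4 by simp
  have hr: "hpos r = (sx (take r A), sy (take r A))" unfolding A_def
    by (rule hpos_take) (use rL in \<open>simp add: N_def A_def\<close>)
  have lenS: "length (hilbA (Suc k)) = 4 * N + 3" unfolding N_def A_def by simp
  have E: "sx A = (if even k then 0 else 2^k - 1)" "sy A = (if even k then 2^k - 1 else 0)"
    using end_pos[of k] by (simp_all add: A_def)
  have HS: "hilbA (Suc k) = (if even k then A @ U # map tD A @ R # map tD A @ D # map tH A
                             else A @ R # map tD A @ U # map tD A @ L # map tH A)"
    by (simp add: A_def)
  have l: "length (map tD A) = N" "length A = N" by (simp_all add: N_def)
  have p1: "hpos (Suc N + r) = (sx (take (Suc N + r) (hilbA (Suc k))), sy (take (Suc N + r) (hilbA (Suc k))))"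
    by (rule hpos_take) (use rL lenS in simp)
  have p2: "hpos (2 * Suc N + r) = (sx (take (2 * Suc N + r) (hilbA (Suc k))), sy (take (2 * Suc N + r) (hilbA (Suc k))))"
    by (rule hpos_take) (use rL lenS in simp)
  have p3: "hpos (3 * Suc N + r) = (sx (take (3 * Suc N + r) (hilbA (Suc k))), sy (take (3 * Suc N + r) (hilbA (Suc k))))"
    by (rule hpos_take) (use rL lenS in simp)
  have T1: "take (Suc N + r) (hilbA (Suc k)) = A @ (if even k then U else R) # take r (map tD A)"
  proof (cases "even k")
    case True
    show ?thesis unfolding HS if_P[OF True] by (rule take_blocks(2)[OF l(2) l(1) l(1) rL])
  next
    case False
    show ?thesis unfolding HS if_not_P[OF False] by (rule take_blocks(2)[OF l(2) l(1) l(1) rL])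
  qed
  have T2: "take (2 * Suc N + r) (hilbA (Suc k)) = A @ (if even k then U else R) # map tD A @
              (if even k then R else U) # take r (map tD A)"
  proof (cases "even k")
    case True
    show ?thesis unfolding HS if_P[OF True] by (rule take_blocks(3)[OF l(2) l(1) l(1) rL])
  next
    case False
    show ?thesis unfolding HS if_not_P[OF False] by (rule take_blocks(3)[OF l(2) l(1) l(1) rL])
  qed
  have T3: "take (3 * Suc N + r) (hilbA (Suc k)) = A @ (if even k then U else R) # map tD A @
              (if even k then R else U) # map tD A @ (if even k then D else L) # take r (map tH A)"
  proof (cases "even k")
    case True
    show ?thesis unfolding HS if_P[OF True] by (rule take_blocks(4)[OF l(2) l(1) l(1) rL])
  next
    case False
    show ?thesis unfolding HS if_not_P[OF False] by (rule take_blocks(4)[OF l(2) l(1) l(1) rL])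
  qed
  note T = T1 T2 T3
  show "hpos (4^k + r) = (if even k then (snd (hpos r), 2^k + fst (hpos r))
                           else (2^k + snd (hpos r), fst (hpos r)))"
    unfolding L4 p1 T hr using E by (cases "even k") (simp_all add: take_map)
  show "hpos (2 * 4^k + r) = (2^k + snd (hpos r), 2^k + fst (hpos r))"
    unfolding L4 p2 T hr using E by (cases "even k") (simp_all add: take_map)
  show "hpos (3 * 4^k + r) = (if even k then (2 * 2^k - 1 - fst (hpos r), 2^k - 1 - snd (hpos r))
                             else (2^k - 1 - fst (hpos r), 2 * 2^k - 1 - snd (hpos r)))"
    unfolding L4 p3 T hr using E by (cases "even k") (simp_all add: take_map)
qed


type_synonym v5 = "int \<times> int \<times> int \<times> int \<times> int"

definition gapp :: "nat \<Rightarrow> v5 \<Rightarrow> v5" where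
  "gapp d f = (case f of (f0,f1,f2,f3,f4) \<Rightarrow>
    (if d = 0 then (-4*f4, f0 - f2 - f3 + 4*f4, f2, f3, f1+f2+f3+f4)
     else if d = 1 then (-4*f4, -f3, f0 - 2*f1 - 3*f2 - 2*f3 + 4*f4, 2*f1+3*f2+3*f3, f1+f2+f3+f4)
     else if d = 2 then (-4*f4, -2*f1-2*f2-3*f3, -f2, f0+2*f1+3*f2+3*f3+4*f4, f1+f2+f3+f4)
     else if d = 3 then (-4*f4, f0-3*f1-2*f2-2*f3+f4, -f0+2*f1+f2+2*f3-4*f4, f0+f1+f2+7*f4, f1+f2+f3+f4)
     else (f0,f1,f2,f3,f4)))"

fun gvec :: "nat list \<Rightarrow> v5" where
  "gvec [] = (1,0,0,0,0)"
| "gvec (d # ds) = gapp d (gvec ds)"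

fun abc :: "nat \<Rightarrow> int \<times> int \<times> int" where
  "abc 0 = (1, 0, 0)"
| "abc (Suc k) = (case abc k of (a, b, c) \<Rightarrow> (-4*c, a + 4*c, b + c))"

lemma abc_closed:
  "3 * fst (abc k) = (if even k then 4 - 2^k else 4 - 2 * 2^k) \<and>
   2 * fst (snd (abc k)) = (if even k then 0 else 2^k) \<and>
   6 * snd (snd (abc k)) = (if even k then 2 * 2^k - 2 else 2^k - 2)"
proof (induction k)
  case 0 then show ?case by simp
next
  case (Suc k)
  obtain a b c where e: "abc k = (a, b, c)" by (metis prod.exhaust)
  show ?case using Suc unfolding e by (cases "even k") (simp_all add: e)
qed

fun digs :: "nat \<Rightarrow> nat \<Rightarrow> nat list" where
  "digs 0 r = []"
| "digs (Suc k) r = digs k (r div 4) @ [r mod 4]"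

lemma digs_msb: "d < 4 \<Longrightarrow> r < 4 ^ k \<Longrightarrow> digs (Suc k) (d * 4 ^ k + r) = d # digs k r"
proof (induction k arbitrary: r)
  case 0 then show ?case by simp
next
  case (Suc k)
  have r4: "r div 4 < 4 ^ k" using Suc.prems(2) by (simp add: less_mult_imp_div_less mult.commute)
  have "(d * 4 ^ Suc k + r) div 4 = d * 4 ^ k + r div 4" by simp
  moreover have "(d * 4 ^ Suc k + r) mod 4 = r mod 4"
  proof -
    have eq: "d * 4 ^ Suc k + r = r + (d * 4 ^ k) * 4" by (simp add: algebra_simps)
    show ?thesis by (simp only: eq mod_mult_self1)
  qed
  ultimately have "digs (Suc (Suc k)) (d * 4 ^ Suc k + r) = digs (Suc k) (d * 4 ^ k + r div 4) @ [r mod 4]"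
    by (simp only: digs.simps)
  also have "\<dots> = d # digs k (r div 4) @ [r mod 4]" using Suc.IH[OF Suc.prems(1) r4] by simp
  finally show ?case by simp
qed

lemma base4_0: "base4 0 = []" by simp
lemma base4_pos: "n > 0 \<Longrightarrow> base4 n = base4 (n div 4) @ [n mod 4]" by simp
declare base4.simps[simp del]

lemma base4_digs: "base4 n = digs (length (base4 n)) n \<and> n < 4 ^ length (base4 n)"
proof (induction n rule: less_induct)
  case (less n)
  show ?case
  proof (cases "n = 0")
    case True then show ?thesis by (simp add: base4_0)
  next
    case False
    then have b: "base4 n = base4 (n div 4) @ [n mod 4]" by (simp add: base4_pos)
    have ih: "base4 (n div 4) = digs (length (base4 (n div 4))) (n div 4) \<and> n div 4 < 4 ^ length (base4 (n div 4))"
      using less False by simp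
    show ?thesis unfolding b using ih by auto
  qed
qed

definition Phi :: "nat \<Rightarrow> nat \<Rightarrow> v5" where
  "Phi k r = (fst (abc k), fst (snd (abc k)) - snd (hpos r), snd (hpos r) - fst (hpos r),
              fst (hpos r), snd (snd (abc k)))"


lemma inv: "r < 4 ^ k \<Longrightarrow> gvec (digs k r) = Phi k r"
proof (induction k arbitrary: r)
  case 0
  then show ?case by (simp add: Phi_def)
next
  case (Suc k r')
  define d where "d = r' div 4 ^ k"
  define r where "r = r' mod 4 ^ k"
  have d4: "d < 4" unfolding d_def using Suc.prems
    by (simp add: less_mult_imp_div_less)
  have rk: "r < 4 ^ k" unfolding r_def by simp
  have r'eq: "r' = d * 4 ^ k + r" unfolding d_def r_def by (rule div_mult_mod_eq[symmetric])
  have g: "gvec (digs (Suc k) r') = gapp d (Phi k r)"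
    unfolding r'eq digs_msb[OF d4 rk] using Suc.IH[OF rk] by simp
  obtain a b c where e: "abc k = (a, b, c)" by (metis prod.exhaust)
  have e1: "abc (Suc k) = (-4*c, a + 4*c, b + c)" using e by simp
  obtain x y where hr: "hpos r = (x, y)" by (metis prod.exhaust)
  have cl: "3 * a = (if even k then 4 - 2^k else 4 - 2 * 2^k)"
           "2 * b = (if even k then 0 else 2^k)"
           "6 * c = (if even k then 2 * 2^k - 2 else 2^k - 2)"
    using abc_closed[of k] unfolding e by simp_all
  have B: "hpos (4^k + r) = (if even k then (y, 2^k + x) else (2^k + y, x))"
          "hpos (2 * 4^k + r) = (2^k + y, 2^k + x)"
          "hpos (3 * 4^k + r) = (if even k then (2 * 2^k - 1 - x, 2^k - 1 - y)
                             else (2^k - 1 - x, 2 * 2^k - 1 - y))"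
    using hpos_block[OF rk] unfolding hr by simp_all
  have "d = 0 \<or> d = 1 \<or> d = 2 \<or> d = 3" using d4 by auto
  then have "gapp d (Phi k r) = Phi (Suc k) r'"
  proof (elim disjE)
    assume d: "d = 0"
    then have r': "r' = r" using r'eq by simp
    show ?thesis unfolding d r' Phi_def e e1 hr by (simp add: gapp_def)
  next
    assume d: "d = 1"
    then have r': "r' = 4^k + r" using r'eq by simp
    show ?thesis unfolding d r' Phi_def e e1 hr B using cl
      by (cases "even k"; simp add: gapp_def; (intro conjI)?; linarith)
  next
    assume d: "d = 2"
    then have r': "r' = 2 * 4^k + r" using r'eq by simp
    show ?thesis unfolding d r' Phi_def e e1 hr B using cl
      by (cases "even k"; simp add: gapp_def; (intro conjI)?; linarith)
  next
    assume d: "d = 3"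
    then have r': "r' = 3 * 4^k + r" using r'eq by simp
    show ?thesis unfolding d r' Phi_def e e1 hr B using cl
      by (cases "even k"; simp add: gapp_def; (intro conjI)?; linarith)
  qed
  then show ?case using g by simp
qed

lemma final: "hpos n = (let f = gvec (base4 n) in (fst (snd (snd (snd f))), fst (snd (snd f)) + fst (snd (snd (snd f)))))"
proof -
  have "gvec (base4 n) = Phi (length (base4 n)) n"
    using base4_digs[of n] inv by metis
  then show ?thesis by (simp add: Phi_def)
qed

definition colm :: "v5 \<Rightarrow> int mat" where
  "colm f = (case f of (f0,f1,f2,f3,f4) \<Rightarrow> mat_of_rows_list 1 [[f0],[f1],[f2],[f3],[f4]])"
lemma colm_simp: "colm (f0,f1,f2,f3,f4) = mat_of_rows_list 1 [[f0],[f1],[f2],[f3],[f4]]"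
  by (simp add: colm_def)
lemma colm_carrier: "colm f \<in> carrier_mat 5 1"
  by (cases f) (simp add: colm_def mat_of_rows_list_def numeral_eq_Suc split: prod.split)

lemma mat5_colm:
  "mat_of_rows_list 5 [[a00,a01,a02,a03,a04],[a10,a11,a12,a13,a14],[a20,a21,a22,a23,a24],
     [a30,a31,a32,a33,a34],[a40,a41,a42,a43,a44]] * colm (f0,f1,f2,f3,f4) =
   colm (a00*f0+a01*f1+a02*f2+a03*f3+a04*f4, a10*f0+a11*f1+a12*f2+a13*f3+a14*f4,
         a20*f0+a21*f1+a22*f2+a23*f3+a24*f4, a30*f0+a31*f1+a32*f2+a33*f3+a34*f4,
         a40*f0+a41*f1+a42*f2+a43*f3+a44*f4)"
  unfolding colm_simp
  apply (rule eq_matI)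
    apply (simp_all add: mat_of_rows_list_def numeral_eq_Suc)
  apply (simp add: scalar_prod_def row_def col_def less_Suc_eq)
  apply (elim disjE)
  apply (simp_all add: atLeast0_lessThan_Suc algebra_simps)
  done

lemma hgamma_carrier: "hgamma d \<in> carrier_mat 5 5"
  by (induction d rule: hgamma.induct) (simp_all add: mat_of_rows_list_def numeral_eq_Suc)

lemma hgammaw_carrier: "hgammaw ds \<in> carrier_mat 5 5"
  by (induction ds) (auto simp: hgammaw_def intro!: mult_carrier_mat[OF hgamma_carrier])

lemma hgamma_colm: "hgamma d * colm f = colm (gapp d f)"
proof -
  obtain f0 f1 f2 f3 f4 where f: "f = (f0,f1,f2,f3,f4)" by (cases f) auto
  consider "d = 0" | "d = 1" | "d = 2" | "d = 3" | m where "d = Suc (Suc (Suc (Suc m)))"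
    by (metis One_nat_def Suc_1 not0_implies_Suc numeral_3_eq_3)
  then show ?thesis
  proof cases
    case 5
    then show ?thesis using colm_carrier[of f] by (simp add: gapp_def f)
  next
    case 1 then show ?thesis unfolding f by (simp only: hgamma.simps mat5_colm) (simp add: gapp_def)
  next
    case 2 then show ?thesis unfolding f by (simp only: One_nat_def hgamma.simps mat5_colm) (simp add: gapp_def)
  next
    case 3 then show ?thesis unfolding f by (simp only: numeral_2_eq_2 hgamma.simps mat5_colm) (simp add: gapp_def)
  next
    case 4 then show ?thesis unfolding f by (simp only: numeral_3_eq_3 hgamma.simps mat5_colm) (simp add: gapp_def)
  qed
qed

lemma hw_colm: "hw = colm (1,0,0,0,0)" by (simp add: hw_def colm_simp)

lemma hgammaw_hw: "hgammaw ds * hw = colm (gvec ds)"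
proof (induction ds)
  case Nil
  then show ?case using colm_carrier[of "(1,0,0,0,0)"] by (simp add: hgammaw_def hw_colm)
next
  case (Cons d ds)
  have "hgammaw (d # ds) * hw = (hgamma d * hgammaw ds) * hw" by (simp add: hgammaw_def)
  also have "\<dots> = hgamma d * (hgammaw ds * hw)"
    using hgamma_carrier hgammaw_carrier colm_carrier hw_colm by (metis assoc_mult_mat)
  finally show ?case using Cons by (simp add: hgamma_colm)
qed

lemma hv_carrier: "hv \<in> carrier_mat 2 5"
  by (simp add: hv_def mat_of_rows_list_def numeral_eq_Suc)

lemma readout: "hv * hgammaw ds * hw = hv * colm (gvec ds)"
  using hv_carrier hgammaw_carrier hw_colm colm_carrier hgammaw_hw by (metis assoc_mult_mat)

lemma hv_colm: "(hv * colm (f0,f1,f2,f3,f4)) $$ (0,0) = f3 \<and> (hv * colm (f0,f1,f2,f3,f4)) $$ (1,0) = f2 + f3"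
  by (simp add: colm_simp hv_def mat_of_rows_list_def scalar_prod_def row_def col_def
         numeral_eq_Suc atLeast0_lessThan_Suc)

theorem mainTheorem2:
  fixes n :: nat
  shows "hpos n = ((hv * hgammaw (base4 n) * hw) $$ (0, 0),
                   (hv * hgammaw (base4 n) * hw) $$ (1, 0))"
proof -
  obtain f0 f1 f2 f3 f4 where f: "gvec (base4 n) = (f0, f1, f2, f3, f4)" by (metis prod.exhaust)
  have "hpos n = (f3, f2 + f3)" using final[of n] unfolding f by simp
  then show ?thesis unfolding readout f using hv_colm[of f0 f1 f2 f3 f4] by simp
qed

end
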